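(* Let $P$ be an $n\times n$ stochastic SIA matrix satisfying the pattern-symmetry condition $p_{ij}>0\Leftrightarrow p_{ji}>0$ for all $i\neq j$. Then (1) $P\in\mathcal S_2$, i.e., the SIA index of $P$ is at most $2$; and (2) if moreover $P$ is symmetric, then $P\in\mathcal S_1$, i.e., $P$ is a Sarymsakov matrix.
   Context: Let $\mathcal N=\{1,\ldots,n\}$. A matrix is stochastic if it is entrywise nonnegative with row sums $1$. For stochastic $P$ and $\mathcal A\subseteq\mathcal N$, $F_P(\mathcal A)=\{j:\ p_{ij}>0\text{ for some } i\in\mathcal A\}$, $F_P^1=F_P$, $F_P^k(\mathcal A)=F_P(F_P^{k-1}(\mathcal A))$. $P$ is SIA if $\lim_{m\to\infty}P^m=\mathbf 1c^T$ for some nonnegative $c$ with entries summing to $1$. For an SIA matrix $P$ and each unordered pair of disjoint nonempty sets $\mathcal A,\tilde{\mathcal A}\subseteq\mathcal N$, let $s(\mathcal A,\tilde{\mathcal A})$ be the smallest integer $k\ge1$ such that either (i) $F_P^k(\mathcal A)\cap F_P^k(\tilde{\mathcal A})\ne\emptyset$, or (ii) $F_P^k(\mathcal A)\cap F_P^k(\tilde{\mathcal A})=\emptyset$ and $|F_P^k(\mathcal A)\cup F_P^k(\tilde{\mathcal A})|>|\mathcal A\cup\tilde{\mathcal A}|$. The SIA index of $P$ is the maximum of $s(\mathcal A,\tilde{\mathcal A})$ over all such pairs. $\mathcal S_k$ is the set of $n\times n$ SIA matrices with SIA index at most $k$; $\mathcal S_1$ is the set of stochastic Sarymsakov matrices.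 *)

theory Defs
  imports "HOL-Analysis.Analysis"
begin

text \<open>Square matrices indexed by a finite type 'n (n = CARD('n)).\<close>

definition stochastic :: "real^'n^'n \<Rightarrow> bool" where
  "stochastic P \<longleftrightarrow> (\<forall>i j. P $ i $ j \<ge> 0) \<and> (\<forall>i. (\<Sum>j\<in>UNIV. P $ i $ j) = 1)"

fun mpow :: "real^'n^'n \<Rightarrow> nat \<Rightarrow> real^'n^'n" where
  "mpow P 0 = mat 1"
| "mpow P (Suc m) = mpow P m ** P"

definition SIA :: "real^'n^'n \<Rightarrow> bool" where
  "SIA P \<longleftrightarrow> stochastic P \<and>
     (\<exists>c::real^'n. (\<forall>j. c $ j \<ge> 0) \<and> (\<Sum>j\<in>UNIV. c $ j) = 1 \<and>
        (\<lambda>m. mpow P m) \<longlonglongrightarrow> (\<chi> i j. c $ j))"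

definition F :: "real^'n^'n \<Rightarrow> 'n set \<Rightarrow> 'n set" where
  "F P A = {j. \<exists>i\<in>A. P $ i $ j > 0}"

definition Fpow :: "real^'n^'n \<Rightarrow> nat \<Rightarrow> 'n set \<Rightarrow> 'n set" where
  "Fpow P k = (F P ^^ k)"

definition s_cond :: "real^'n^'n \<Rightarrow> 'n set \<Rightarrow> 'n set \<Rightarrow> nat \<Rightarrow> bool" where
  "s_cond P A B k \<longleftrightarrow>
     Fpow P k A \<inter> Fpow P k B \<noteq> {} \<or>
     (Fpow P k A \<inter> Fpow P k B = {} \<and> card (Fpow P k A \<union> Fpow P k B) > card (A \<union> B))"

definition s_val :: "real^'n^'n \<Rightarrow> 'n set \<Rightarrow> 'n set \<Rightarrow> nat" where
  "s_val P A B = (LEAST k. k \<ge> 1 \<and> s_cond P A B k)"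

definition SIA_index :: "real^'n^'n \<Rightarrow> nat" where
  "SIA_index P = Sup {s_val P A B | A B. A \<noteq> {} \<and> B \<noteq> {} \<and> A \<inter> B = {}}"

definition S_class :: "nat \<Rightarrow> (real^'n^'n) set" where
  "S_class k = {P. SIA P \<and> SIA_index P \<le> k}"

end

theory Submission
  imports Defs
begin

lemma index_le:
  fixes P :: "real^'n^'n"
  assumes "\<And>A B. A \<noteq> {} \<Longrightarrow> B \<noteq> {} \<Longrightarrow> A \<inter> B = {} \<Longrightarrow> s_val P A B \<le> k"
  shows "SIA_index P \<le> k"
proof -
  let ?X = "{s_val P A B | A B. A \<noteq> {} \<and> B \<noteq> {} \<and> A \<inter> B = {}}"
  have b: "\<forall>x\<in>?X. x \<le> k" using assms by blast
  show ?thesis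
  proof (cases "?X = {}")
    case True thus ?thesis unfolding SIA_index_def by (metis Sup_nat_empty zero_le)
  next
    case False
    have "bdd_above ?X" using b by (meson bdd_above.I)
    thus ?thesis unfolding SIA_index_def using False b by (simp add: cSup_le_iff)
  qed
qed

lemma sval_le:
  assumes "s_cond P A B k'" "1 \<le> k'" "k' \<le> k"
  shows "s_val P A B \<le> k"
proof -
  have "s_val P A B \<le> k'" unfolding s_val_def by (rule Least_le) (use assms in auto)
  thus ?thesis using assms by simp
qed

lemma mpow_nonneg:
  fixes P :: "real^'n^'n"
  assumes "stochastic P"
  shows "mpow P m $ i $ j \<ge> 0"
proof (induction m arbitrary: i j)
  case 0 thus ?case by (simp add: mat_def)
next
  case (Suc m)
  thus ?case using assms unfolding stochastic_def
    by (simp add: matrix_matrix_mult_def sum_nonneg)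
qed

lemma Fpow_char:
  fixes P :: "real^'n^'n"
  assumes "stochastic P"
  shows "Fpow P m S = {j. \<exists>i\<in>S. mpow P m $ i $ j > 0}"
proof (induction m)
  case 0 thus ?case by (auto simp: Fpow_def mat_def)
next
  case (Suc m)
  have "Fpow P (Suc m) S = F P (Fpow P m S)" by (simp add: Fpow_def)
  also have "\<dots> = {j. \<exists>i\<in>S. mpow P (Suc m) $ i $ j > 0}"
  proof (intro set_eqI iffI)
    fix j assume "j \<in> F P (Fpow P m S)"
    then obtain k i where k: "i \<in> S" "mpow P m $ i $ k > 0" "P $ k $ j > 0"
      using Suc by (auto simp: F_def)
    have nn: "\<forall>k\<in>UNIV. 0 \<le> mpow P m $ i $ k * P $ k $ j"
      using mpow_nonneg[OF assms] assms unfolding stochastic_def by simp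
    have "0 < mpow P m $ i $ k * P $ k $ j" using k by simp
    hence "0 < (\<Sum>k\<in>UNIV. mpow P m $ i $ k * P $ k $ j)"
      using nn by (intro sum_pos2[where i=k]) auto
    thus "j \<in> {j. \<exists>i\<in>S. mpow P (Suc m) $ i $ j > 0}"
      using k by (auto simp: matrix_matrix_mult_def)
  next
    fix j assume "j \<in> {j. \<exists>i\<in>S. mpow P (Suc m) $ i $ j > 0}"
    then obtain i where i: "i \<in> S" "0 < (\<Sum>k\<in>UNIV. mpow P m $ i $ k * P $ k $ j)"
      by (auto simp: matrix_matrix_mult_def)
    then obtain k where "mpow P m $ i $ k * P $ k $ j \<noteq> 0"
      by (metis (no_types, lifting) less_irrefl sum.neutral)
    moreover have "mpow P m $ i $ k \<ge> 0" "P $ k $ j \<ge> 0"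
      using mpow_nonneg[OF assms] assms unfolding stochastic_def by auto
    ultimately have "mpow P m $ i $ k > 0" "P $ k $ j > 0" by (auto simp: less_le)
    thus "j \<in> F P (Fpow P m S)" using Suc i by (auto simp: F_def)
  qed
  finally show ?case .
qed

lemma SIA_meet:
  fixes P :: "real^'n^'n"
  assumes "SIA P"
  shows "\<exists>M. \<forall>m\<ge>M. \<exists>j. mpow P m $ i $ j > 0 \<and> mpow P m $ i' $ j > 0"
proof -
  obtain c :: "real^'n" where c: "\<forall>j. c $ j \<ge> 0" "(\<Sum>j\<in>UNIV. c $ j) = 1"
    "(\<lambda>m. mpow P m) \<longlonglongrightarrow> (\<chi> i j. c $ j)"
    using assms unfolding SIA_def by blast
  obtain j where j: "c $ j > 0"
  proof (rule ccontr)
    assume "\<not> thesis"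
    hence "\<forall>j. c $ j = 0" using c(1) that by (metis less_le)
    thus False using c(2) by simp
  qed
  have t: "(\<lambda>m. mpow P m $ x $ j) \<longlonglongrightarrow> c $ j" for x
    using tendsto_vec_nth[OF tendsto_vec_nth[OF c(3)], of x j] by simp
  have "eventually (\<lambda>m. mpow P m $ i $ j > 0 \<and> mpow P m $ i' $ j > 0) sequentially"
    using order_tendstoD(1)[OF t j, of i] order_tendstoD(1)[OF t j, of i']
    by (simp add: eventually_conj)
  thus ?thesis unfolding eventually_sequentially by blast
qed

lemma F_mono: "X \<subseteq> Y \<Longrightarrow> F P X \<subseteq> F P Y"
  unfolding F_def by auto

lemma Fpow_even:
  assumes "F P (F P A) \<subseteq> A"
  shows "Fpow P (2*m) A \<subseteq> A"
proof (induction m)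
  case 0 thus ?case by (simp add: Fpow_def)
next
  case (Suc m)
  have "Fpow P (2 * Suc m) A = F P (F P (Fpow P (2*m) A))"
    by (simp add: Fpow_def)
  also have "\<dots> \<subseteq> F P (F P A)" using Suc by (intro F_mono)
  finally show ?case using assms by blast
qed

lemma contra:
  fixes P :: "real^'n^'n"
  assumes "stochastic P" "SIA P" "A \<noteq> {}" "B \<noteq> {}" "A \<inter> B = {}"
    "F P (F P A) \<subseteq> A" "F P (F P B) \<subseteq> B"
  shows False
proof -
  obtain i i' where ii: "i \<in> A" "i' \<in> B" using assms by blast
  obtain M where M: "\<forall>m\<ge>M. \<exists>j. mpow P m $ i $ j > 0 \<and> mpow P m $ i' $ j > 0"
    using SIA_meet[OF assms(2)] by blast
  have "2*M \<ge> M" by simp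
  then obtain j where "mpow P (2*M) $ i $ j > 0" "mpow P (2*M) $ i' $ j > 0" using M by blast
  hence "j \<in> Fpow P (2*M) A" "j \<in> Fpow P (2*M) B"
    using ii Fpow_char[OF assms(1)] by auto
  hence "j \<in> A" "j \<in> B" using Fpow_even assms(6,7) by blast+
  thus False using assms(5) by blast
qed

lemma row_pos:
  fixes P :: "real^'n^'n"
  assumes "stochastic P"
  shows "\<exists>j. P $ i $ j > 0"
proof (rule ccontr)
  assume "\<not> ?thesis"
  hence "\<forall>j. P $ i $ j = 0" using assms unfolding stochastic_def by (metis less_le)
  hence "(\<Sum>j\<in>UNIV. P $ i $ j) = 0" by simp
  thus False using assms unfolding stochastic_def by simp
qed

lemma sub_FF:
  fixes P :: "real^'n^'n"
  assumes "stochastic P" "\<forall>i j. i \<noteq> j \<longrightarrow> (P $ i $ j > 0 \<longleftrightarrow> P $ j $ i > 0)"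
  shows "A \<subseteq> F P (F P A)"
proof
  fix i assume i: "i \<in> A"
  obtain j where j: "P $ i $ j > 0" using row_pos[OF assms(1)] by blast
  show "i \<in> F P (F P A)"
  proof (cases "j = i")
    case True thus ?thesis using i j unfolding F_def by blast
  next
    case False
    hence "P $ j $ i > 0" using assms(2) j by blast
    thus ?thesis using i j unfolding F_def by blast
  qed
qed

lemma part1:
  fixes P :: "real^'n^'n"
  assumes "stochastic P" "SIA P"
    "\<forall>i j. i \<noteq> j \<longrightarrow> (P $ i $ j > 0 \<longleftrightarrow> P $ j $ i > 0)"
    "A \<noteq> {}" "B \<noteq> {}" "A \<inter> B = {}"
  shows "s_cond P A B 2"
proof (rule ccontr)
  assume n: "\<not> s_cond P A B 2"
  have e: "Fpow P 2 X = F P (F P X)" for X by (simp add: Fpow_def numeral_2_eq_2)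
  have d: "F P (F P A) \<inter> F P (F P B) = {}"
    and c: "card (F P (F P A) \<union> F P (F P B)) \<le> card (A \<union> B)"
    using n unfolding s_cond_def e by auto
  have sA: "A \<subseteq> F P (F P A)" and sB: "B \<subseteq> F P (F P B)"
    using sub_FF[OF assms(1,3)] by auto
  have eq: "A \<union> B = F P (F P A) \<union> F P (F P B)"
  proof -
    have "A \<union> B \<subseteq> F P (F P A) \<union> F P (F P B)" using sA sB by blast
    moreover have "card (F P (F P A) \<union> F P (F P B)) \<le> card (A \<union> B)" using c .
    ultimately show ?thesis by (metis card_seteq finite)
  qed
  have "F P (F P A) \<subseteq> A" using eq d sB by blast
  moreover have "F P (F P B) \<subseteq> B" using eq d sA by blast
  ultimately show False using contra assms by blast
qed

lemma cardF:
  fixes P :: "real^'n^'n"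
  assumes "stochastic P" "transpose P = P"
  shows "real (card (F P S)) = real (card S) + (\<Sum>j\<in>F P S. \<Sum>i\<in>-S. P $ i $ j)"
proof -
  have sym: "P $ i $ j = P $ j $ i" for i j
    using assms(2) by (metis transpose_def vec_lambda_beta)
  have nn: "P $ i $ j \<ge> 0" for i j using assms(1) unfolding stochastic_def by auto
  have col: "(\<Sum>i\<in>UNIV. P $ i $ j) = 1" for j
  proof -
    have "(\<Sum>i\<in>UNIV. P $ i $ j) = (\<Sum>i\<in>UNIV. P $ j $ i)" by (simp add: sym)
    thus ?thesis using assms(1) unfolding stochastic_def by simp
  qed
  have row: "(\<Sum>j\<in>F P S. P $ i $ j) = 1" if "i \<in> S" for i
  proof -
    have "(\<Sum>j\<in>F P S. P $ i $ j) = (\<Sum>j\<in>UNIV. P $ i $ j)"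
      by (rule sum.mono_neutral_left) (use that nn in \<open>auto simp: F_def less_le\<close>)
    thus ?thesis using assms(1) unfolding stochastic_def by simp
  qed
  have "real (card (F P S)) = (\<Sum>j\<in>F P S. \<Sum>i\<in>UNIV. P $ i $ j)" by (simp add: col)
  also have "\<dots> = (\<Sum>j\<in>F P S. (\<Sum>i\<in>S. P $ i $ j) + (\<Sum>i\<in>-S. P $ i $ j))"
  proof (rule sum.cong[OF refl])
    fix j
    have "UNIV = S \<union> -S" by auto
    thus "(\<Sum>i\<in>UNIV. P $ i $ j) = (\<Sum>i\<in>S. P $ i $ j) + (\<Sum>i\<in>-S. P $ i $ j)"
      by (metis Compl_disjoint finite sum.union_disjoint)
  qed
  also have "\<dots> = (\<Sum>j\<in>F P S. \<Sum>i\<in>S. P $ i $ j) + (\<Sum>j\<in>F P S. \<Sum>i\<in>-S. P $ i $ j)"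
    by (simp add: sum.distrib)
  also have "(\<Sum>j\<in>F P S. \<Sum>i\<in>S. P $ i $ j) = (\<Sum>i\<in>S. \<Sum>j\<in>F P S. P $ i $ j)"
    by (rule sum.swap)
  also have "\<dots> = real (card S)" by (simp add: row)
  finally show ?thesis .
qed

lemma part2:
  fixes P :: "real^'n^'n"
  assumes "stochastic P" "SIA P" "transpose P = P"
    "A \<noteq> {}" "B \<noteq> {}" "A \<inter> B = {}"
  shows "s_cond P A B 1"
proof (rule ccontr)
  assume n: "\<not> s_cond P A B 1"
  have e: "Fpow P 1 X = F P X" for X by (simp add: Fpow_def)
  have d: "F P A \<inter> F P B = {}"
    and c: "card (F P A \<union> F P B) \<le> card (A \<union> B)"
    using n unfolding s_cond_def e by auto
  have sym: "P $ i $ j = P $ j $ i" for i j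
    using assms(3) by (metis transpose_def vec_lambda_beta)
  have nn: "P $ i $ j \<ge> 0" for i j using assms(1) unfolding stochastic_def by auto
  define D where "D S = (\<Sum>j\<in>F P S. \<Sum>i\<in>-S. P $ i $ j)" for S
  have Dnn: "D S \<ge> 0" for S unfolding D_def by (intro sum_nonneg) (simp add: nn)
  have cA: "real (card (F P A)) = real (card A) + D A"
    and cB: "real (card (F P B)) = real (card B) + D B"
    using cardF[OF assms(1,3)] unfolding D_def by auto
  have "card (F P A \<union> F P B) = card (F P A) + card (F P B)"
    using d by (simp add: card_Un_disjoint)
  moreover have "card (A \<union> B) = card A + card B"
    using assms(6) by (simp add: card_Un_disjoint)
  ultimately have "real (card (F P A)) + real (card (F P B)) \<le> real (card A) + real (card B)"
    using c by linarith
  hence D0: "D A = 0" "D B = 0" using cA cB Dnn[of A] Dnn[of B] by linarith+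
  have FF: "F P (F P S) \<subseteq> S" if "D S = 0" for S
  proof
    fix x assume "x \<in> F P (F P S)"
    then obtain j where j: "j \<in> F P S" "P $ j $ x > 0" unfolding F_def by blast
    show "x \<in> S"
    proof (rule ccontr)
      assume "x \<notin> S"
      have z: "\<forall>j\<in>F P S. (\<Sum>i\<in>-S. P $ i $ j) = 0"
        using that unfolding D_def
        by (subst (asm) sum_nonneg_eq_0_iff) (auto intro: sum_nonneg simp: nn)
      hence "(\<Sum>i\<in>-S. P $ i $ j) = 0" using j by blast
      hence "\<forall>i\<in>-S. P $ i $ j = 0" by (subst (asm) sum_nonneg_eq_0_iff) (auto simp: nn)
      thus False using \<open>x \<notin> S\<close> j sym[of j x] by auto
    qed
  qed
  show False using contra[OF assms(1,2,4,5,6) FF FF] D0 by blast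
qed

theorem proposition2:
  fixes P :: "real^'n^'n"
  assumes "stochastic P" and "SIA P"
    and "\<forall>i j. i \<noteq> j \<longrightarrow> (P $ i $ j > 0 \<longleftrightarrow> P $ j $ i > 0)"
  shows "P \<in> S_class 2 \<and> (transpose P = P \<longrightarrow> P \<in> S_class 1)"
proof
  have "SIA_index P \<le> 2"
    by (rule index_le, rule sval_le[of _ _ _ 2]) (use part1[OF assms] in auto)
  thus "P \<in> S_class 2" using assms(2) by (simp add: S_class_def)
next
  show "transpose P = P \<longrightarrow> P \<in> S_class 1"
  proof
    assume t: "transpose P = P"
    have "SIA_index P \<le> 1"
      by (rule index_le, rule sval_le[of _ _ _ 1]) (use part2[OF assms(1,2) t] in auto)
    thus "P \<in> S_class 1" using assms(2) by (simp add: S_class_def)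
  qed
qed

end
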